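(* Let $k\ge2$ and let $L_{01}\in\mathbb{R}^{k\times k}$ be the 0-1 loss, $L_{01}(i,j)=[i\ne j]$, with quadratic surrogate $\Phi_{quad}(f,y)=\frac1{2k}\|f+L_{01}(:,y)\|_2^2$. Then $$H_{\Phi_{quad},L_{01},\mathbb{R}^k}(\varepsilon)=\frac{\varepsilon^2}{4k},\qquad0\le\varepsilon\le1.$$
   Context: $[A]=1$ if $A$ is true and $0$ otherwise. $\mathrm{pred}(f)$ is the smallest index maximizing $f_c$. For $q\in\Delta_k$: $\ell(f,q)=\sum_cq_cL(\mathrm{pred}(f),c)$, $\phi(f,q)=\sum_cq_c\Phi(f,c)$, $\delta\ell(f,q)=\ell(f,q)-\inf_{\hat f\in\mathcal{F}}\ell(\hat f,q)$, $\delta\phi(f,q)=\phi(f,q)-\inf_{\hat f\in\mathcal{F}}\phi(\hat f,q)$; calibration function $H_{\Phi,L,\mathcal{F}}(\varepsilon)=\inf\{\delta\phi(f,q):f\in\mathcal{F},q\in\Delta_k,\delta\ell(f,q)\ge\varepsilon\}$ ($+\infty$ if empty); here $\mathcal{F}=\mathbb{R}^k$. *)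

theory Defs
  imports Complex_Main "HOL-Library.Extended_Real"
begin

(* Classes are indexed 0..k-1 (i.e. {..<k}); score vectors f in R^k and
   distributions q in Delta_k are functions nat => real that vanish outside {..<k}. *)

definition score_space :: "nat \<Rightarrow> (nat \<Rightarrow> real) set" where
  "score_space k = {f. \<forall>i\<ge>k. f i = 0}"

definition simplex :: "nat \<Rightarrow> (nat \<Rightarrow> real) set" where
  "simplex k = {q. (\<forall>c<k. 0 \<le> q c) \<and> (\<Sum>c<k. q c) = 1 \<and> (\<forall>c\<ge>k. q c = 0)}"

definition pred :: "nat \<Rightarrow> (nat \<Rightarrow> real) \<Rightarrow> nat" where
  "pred k f = (LEAST c. c < k \<and> (\<forall>c'<k. f c' \<le> f c))"

definition ell :: "nat \<Rightarrow> (nat \<Rightarrow> nat \<Rightarrow> real) \<Rightarrow> (nat \<Rightarrow> real) \<Rightarrow> (nat \<Rightarrow> real) \<Rightarrow> real" where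
  "ell k L f q = (\<Sum>c<k. q c * L (pred k f) c)"

definition phi :: "nat \<Rightarrow> ((nat \<Rightarrow> real) \<Rightarrow> nat \<Rightarrow> real) \<Rightarrow> (nat \<Rightarrow> real) \<Rightarrow> (nat \<Rightarrow> real) \<Rightarrow> real" where
  "phi k Phi f q = (\<Sum>c<k. q c * Phi f c)"

definition delta_ell :: "nat \<Rightarrow> (nat \<Rightarrow> nat \<Rightarrow> real) \<Rightarrow> (nat \<Rightarrow> real) \<Rightarrow> (nat \<Rightarrow> real) \<Rightarrow> real" where
  "delta_ell k L f q = ell k L f q - (INF g\<in>score_space k. ell k L g q)"

definition delta_phi :: "nat \<Rightarrow> ((nat \<Rightarrow> real) \<Rightarrow> nat \<Rightarrow> real) \<Rightarrow> (nat \<Rightarrow> real) \<Rightarrow> (nat \<Rightarrow> real) \<Rightarrow> real" where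
  "delta_phi k Phi f q = phi k Phi f q - (INF g\<in>score_space k. phi k Phi g q)"

(* calibration function with F = R^k; value +infinity if the set is empty *)
definition calib :: "nat \<Rightarrow> ((nat \<Rightarrow> real) \<Rightarrow> nat \<Rightarrow> real) \<Rightarrow> (nat \<Rightarrow> nat \<Rightarrow> real) \<Rightarrow> real \<Rightarrow> ereal" where
  "calib k Phi L \<epsilon> = Inf {ereal (delta_phi k Phi f q) | f q.
      f \<in> score_space k \<and> q \<in> simplex k \<and> delta_ell k L f q \<ge> \<epsilon>}"

definition L01 :: "nat \<Rightarrow> nat \<Rightarrow> real" where
  "L01 i j = (if i \<noteq> j then 1 else 0)"

definition Phi_quad :: "nat \<Rightarrow> (nat \<Rightarrow> real) \<Rightarrow> nat \<Rightarrow> real" where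
  "Phi_quad k f y = 1 / (2 * real k) * (\<Sum>c<k. (f c + L01 c y)^2)"

end

theory Submission
  imports Defs
begin

lemma pred_props:
  assumes "k > 0"
  shows "pred k f < k \<and> (\<forall>c'<k. f c' \<le> f (pred k f))"
proof -
  have "Max (f ` {..<k}) \<in> f ` {..<k}" by (rule Max_in) (use assms in auto)
  then obtain m where m: "m < k" "f m = Max (f ` {..<k})" by auto
  have "\<forall>c'<k. f c' \<le> f m" using m by auto
  hence ex: "\<exists>c. c < k \<and> (\<forall>c'<k. f c' \<le> f c)" using m by blast
  show ?thesis unfolding pred_def by (rule LeastI_ex[OF ex])
qed

lemma ell_eq:
  assumes "k > 0"
  shows "ell k L01 f q = (\<Sum>c<k. q c) - q (pred k f)"
proof -
  let ?p = "pred k f"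
  have p: "?p < k" using pred_props[OF assms] by blast
  have "ell k L01 f q = (\<Sum>c<k. q c - (if c = ?p then q c else 0))"
    unfolding ell_def L01_def by (rule sum.cong) auto
  also have "\<dots> = (\<Sum>c<k. q c) - (\<Sum>c<k. if c = ?p then q c else 0)"
    by (simp add: sum_subtractf)
  also have "\<dots> = (\<Sum>c<k. q c) - q ?p" using p by (simp add: sum.delta)
  finally show ?thesis .
qed

lemma sq_sum_y:
  assumes "y < k"
  shows "(\<Sum>c<k. (f c + L01 c y)^2) = (\<Sum>c<k. (f c + 1)^2) - 2*(f y + 1) + 1"
proof -
  have "(\<Sum>c<k. (f c + L01 c y)^2) = (\<Sum>c<k. (f c + 1)^2 - (if c = y then 2*(f c+1) - 1 else 0))"
    by (rule sum.cong) (auto simp: L01_def power2_eq_square algebra_simps)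
  also have "\<dots> = (\<Sum>c<k. (f c + 1)^2) - (\<Sum>c<k. (if c = y then 2*(f c+1) - 1 else 0))"
    by (simp add: sum_subtractf)
  also have "\<dots> = (\<Sum>c<k. (f c + 1)^2) - 2*(f y + 1) + 1" using assms by (simp add: sum.delta)
  finally show ?thesis .
qed

lemma phi_eq:
  assumes "q \<in> simplex k"
  shows "phi k (Phi_quad k) f q = 1/(2*real k) * ((\<Sum>c<k. (f c + 1 - q c)^2) + 1 - (\<Sum>c<k. (q c)^2))"
proof -
  let ?A = "\<Sum>c<k. (f c + 1)^2"
  have s1: "(\<Sum>c<k. q c) = 1" using assms by (simp add: simplex_def)
  have "phi k (Phi_quad k) f q = 1/(2*real k) * (\<Sum>y<k. q y * (?A - 2*(f y + 1) + 1))"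
  proof -
    have "phi k (Phi_quad k) f q = (\<Sum>y<k. 1/(2*real k) * (q y * (?A - 2*(f y + 1) + 1)))"
      unfolding phi_def Phi_quad_def by (rule sum.cong) (simp_all add: sq_sum_y)
    thus ?thesis by (simp add: sum_distrib_left)
  qed
  also have "(\<Sum>y<k. q y * (?A - 2*(f y + 1) + 1)) = ?A * (\<Sum>y<k. q y) - 2 * (\<Sum>y<k. q y * (f y + 1)) + (\<Sum>y<k. q y)"
  proof -
    have "(\<Sum>y<k. q y * (?A - 2*(f y + 1) + 1)) = (\<Sum>y<k. ?A * q y - 2 * (q y * (f y + 1)) + q y)"
      by (rule sum.cong) (simp_all add: algebra_simps)
    also have "\<dots> = (\<Sum>y<k. ?A * q y) - (\<Sum>y<k. 2 * (q y * (f y + 1))) + (\<Sum>y<k. q y)"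
      by (simp only: sum.distrib sum_subtractf)
    also have "\<dots> = ?A * (\<Sum>y<k. q y) - 2 * (\<Sum>y<k. q y * (f y + 1)) + (\<Sum>y<k. q y)"
      by (simp only: sum_distrib_left)
    finally show ?thesis .
  qed
  also have "\<dots> = ?A - 2 * (\<Sum>y<k. q y * (f y + 1)) + 1" using s1 by simp
  also have "(\<Sum>c<k. (f c + 1 - q c)^2) = ?A - 2 * (\<Sum>y<k. q y * (f y + 1)) + (\<Sum>c<k. (q c)^2)"
    by (simp add: power2_diff sum.distrib sum_subtractf sum_distrib_left algebra_simps)
  ultimately show ?thesis by simp
qed

lemma delta_phi_eq:
  assumes "q \<in> simplex k" "k > 0"
  shows "delta_phi k (Phi_quad k) f q = 1/(2*real k) * (\<Sum>c<k. (f c + 1 - q c)^2)"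
proof -
  let ?v = "1/(2*real k) * (1 - (\<Sum>c<k. (q c)^2))"
  define fs where "fs = (\<lambda>c. if c < k then q c - 1 else 0)"
  have fs: "fs \<in> score_space k" unfolding score_space_def fs_def by auto
  have "(\<Sum>c<k. (fs c + 1 - q c)^2) = 0" by (rule sum.neutral) (auto simp: fs_def)
  hence vfs: "phi k (Phi_quad k) fs q = ?v" using phi_eq[OF assms(1)] by simp
  have low: "phi k (Phi_quad k) g q \<ge> ?v" for g
  proof -
    have "(\<Sum>c<k. (g c + 1 - q c)^2) \<ge> 0" by (rule sum_nonneg) auto
    moreover have "1/(2*real k) > 0" using assms by simp
    ultimately show ?thesis unfolding phi_eq[OF assms(1)]
      by (simp add: algebra_simps mult_left_mono)
  qed
  have "(INF g\<in>score_space k. phi k (Phi_quad k) g q) = ?v"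
  proof (rule antisym)
    show "(INF g\<in>score_space k. phi k (Phi_quad k) g q) \<le> ?v"
      using cINF_lower[of "\<lambda>g. phi k (Phi_quad k) g q" "score_space k" fs] fs vfs low
      by (auto simp: bdd_below_def)
    show "?v \<le> (INF g\<in>score_space k. phi k (Phi_quad k) g q)"
      using fs low by (intro cINF_greatest) auto
  qed
  thus ?thesis unfolding delta_phi_def phi_eq[OF assms(1)] by (simp add: algebra_simps)
qed

lemma delta_ell_eq:
  assumes "q \<in> simplex k" "k > 0"
  shows "delta_ell k L01 f q = q (pred k q) - q (pred k f)"
proof -
  have s1: "(\<Sum>c<k. q c) = 1" using assms by (simp add: simplex_def)
  have qs: "q \<in> score_space k" using assms by (simp add: simplex_def score_space_def)
  have e: "ell k L01 g q = 1 - q (pred k g)" for g using ell_eq[OF assms(2)] s1 by simp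
  have low: "ell k L01 g q \<ge> 1 - q (pred k q)" for g
    using pred_props[OF assms(2), of q] pred_props[OF assms(2), of g] e by auto
  have "(INF g\<in>score_space k. ell k L01 g q) = 1 - q (pred k q)"
  proof (rule antisym)
    show "(INF g\<in>score_space k. ell k L01 g q) \<le> 1 - q (pred k q)"
    proof -
      have "bdd_below ((\<lambda>g. ell k L01 g q) ` score_space k)"
        using low by (auto simp: bdd_below_def)
      from cINF_lower[OF this qs] show ?thesis by (simp add: e)
    qed
    show "1 - q (pred k q) \<le> (INF g\<in>score_space k. ell k L01 g q)"
      using qs low by (intro cINF_greatest) auto
  qed
  thus ?thesis unfolding delta_ell_def e by simp
qed

lemma lower_bound:
  assumes f: "f \<in> score_space k" and q: "q \<in> simplex k" and k: "k > 0"
    and e0: "0 \<le> \<epsilon>" and de: "delta_ell k L01 f q \<ge> \<epsilon>"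
  shows "delta_phi k (Phi_quad k) f q \<ge> \<epsilon>^2 / (4 * real k)"
proof -
  let ?p = "pred k f" and ?m = "pred k q"
  let ?h = "\<lambda>c. (f c + 1 - q c)^2"
  have pp: "?p < k" "f ?m \<le> f ?p" "?m < k" using pred_props[OF k, of f] pred_props[OF k, of q] by auto
  have eps: "\<epsilon> \<le> q ?m - q ?p" using de delta_ell_eq[OF q k] by simp
  have kp: "1/(2*real k) > 0" using k by simp
  have dp: "delta_phi k (Phi_quad k) f q = 1/(2*real k) * sum ?h {..<k}" using delta_phi_eq[OF q k] .
  show ?thesis
  proof (cases "?p = ?m")
    case True
    hence "\<epsilon> = 0" using eps e0 by simp
    moreover have "sum ?h {..<k} \<ge> 0" by (rule sum_nonneg) auto
    ultimately show ?thesis using dp kp by simp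
  next
    case False
    have "sum ?h {?p, ?m} \<le> sum ?h {..<k}" by (rule sum_mono2) (use pp in auto)
    hence S: "?h ?p + ?h ?m \<le> sum ?h {..<k}" using False by simp
    define a where "a = f ?p + 1 - q ?p"
    define b where "b = f ?m + 1 - q ?m"
    have ab: "a - b \<ge> \<epsilon>" unfolding a_def b_def using eps pp by simp
    have "\<epsilon>^2 \<le> (a - b)^2" using ab e0 by (intro power_mono) auto
    also have "\<dots> \<le> 2 * (a^2 + b^2)" proof -
      have "(a-b)^2 + (a+b)^2 = 2*(a^2+b^2)" by (simp add: power2_eq_square algebra_simps)
      moreover have "(a+b)^2 \<ge> 0" by simp
      ultimately show ?thesis by linarith
    qed
    finally have "\<epsilon>^2 / 2 \<le> ?h ?p + ?h ?m" unfolding a_def b_def by simp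
    hence "\<epsilon>^2 / 2 \<le> sum ?h {..<k}" using S by simp
    hence "1/(2*real k) * (\<epsilon>^2 / 2) \<le> 1/(2*real k) * sum ?h {..<k}"
      using kp by (intro mult_left_mono) auto
    thus ?thesis using dp by simp
  qed
qed

lemma witness:
  assumes k: "k \<ge> 2" and e0: "0 \<le> \<epsilon>" and e1: "\<epsilon> \<le> 1"
  shows "\<exists>f q. f \<in> score_space k \<and> q \<in> simplex k \<and> delta_ell k L01 f q \<ge> \<epsilon>
     \<and> delta_phi k (Phi_quad k) f q = \<epsilon>^2 / (4 * real k)"
proof -
  define fw :: "nat \<Rightarrow> real" where "fw = (\<lambda>c. if c < 2 then -1/2 else if c < k then -1 else 0)"
  define qw :: "nat \<Rightarrow> real" where "qw = (\<lambda>c. if c = 0 then (1-\<epsilon>)/2 else if c = 1 then (1+\<epsilon>)/2 else 0)"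
  have k0: "k > 0" using k by simp
  have sub: "{0,1} \<subseteq> {..<k}" using k by auto
  have fs: "fw \<in> score_space k" unfolding score_space_def fw_def using k by auto
  have "(\<Sum>c<k. qw c) = (\<Sum>c\<in>{0,1}. qw c)"
    by (rule sum.mono_neutral_right) (use sub in \<open>auto simp: qw_def\<close>)
  hence "(\<Sum>c<k. qw c) = 1" by (simp add: qw_def field_simps)
  hence qs: "qw \<in> simplex k" unfolding simplex_def qw_def using k e0 e1 by auto
  have p0: "pred k fw = 0" unfolding pred_def
    by (rule Least_equality) (use k0 in \<open>auto simp: fw_def\<close>)
  have "qw 1 \<le> qw (pred k qw)" using pred_props[OF k0, of qw] k by auto
  moreover have "qw 1 - qw 0 = \<epsilon>" by (simp add: qw_def field_simps)
  ultimately have de: "delta_ell k L01 fw qw \<ge> \<epsilon>" using delta_ell_eq[OF qs k0, of fw] p0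
    by simp
  have "(\<Sum>c<k. (fw c + 1 - qw c)^2) = (\<Sum>c\<in>{0,1}. (fw c + 1 - qw c)^2)"
    by (rule sum.mono_neutral_right) (use sub in \<open>auto simp: qw_def fw_def\<close>)
  also have "\<dots> = \<epsilon>^2 / 2" by (simp add: qw_def fw_def power2_eq_square field_simps)
  finally have "delta_phi k (Phi_quad k) fw qw = \<epsilon>^2 / (4 * real k)"
    using delta_phi_eq[OF qs k0, of fw] k0 by (simp add: field_simps)
  thus ?thesis using fs qs de by blast
qed

theorem proposition12:
  fixes k :: nat and \<epsilon> :: real
  assumes "k \<ge> 2" and "0 \<le> \<epsilon>" and "\<epsilon> \<le> 1"
  shows "calib k (Phi_quad k) L01 \<epsilon> = ereal (\<epsilon>^2 / (4 * real k))"
proof -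
  have k0: "k > 0" using assms by simp
  obtain f q where w: "f \<in> score_space k" "q \<in> simplex k" "delta_ell k L01 f q \<ge> \<epsilon>"
     "delta_phi k (Phi_quad k) f q = \<epsilon>^2 / (4 * real k)"
    using witness[OF assms] by blast
  show ?thesis unfolding calib_def
  proof (rule antisym)
    show "Inf {ereal (delta_phi k (Phi_quad k) f q) | f q.
      f \<in> score_space k \<and> q \<in> simplex k \<and> delta_ell k L01 f q \<ge> \<epsilon>} \<le> ereal (\<epsilon>^2 / (4 * real k))"
      by (rule Inf_lower) (use w in force)
    show "ereal (\<epsilon>^2 / (4 * real k)) \<le> Inf {ereal (delta_phi k (Phi_quad k) f q) | f q.
      f \<in> score_space k \<and> q \<in> simplex k \<and> delta_ell k L01 f q \<ge> \<epsilon>}"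
      by (rule Inf_greatest) (use lower_bound k0 assms(2) in force)
  qed
qed

end
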